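(* In the finite-sum strongly monotone setting below, for any $0<\alpha\le\mu/(5nl^2)$ and $K\ge1$, the GDA iterates satisfy $$\max_{\tau_1,\dots,\tau_K\in\mathbb{S}_n}\|\mathbf{z}^{K+1}_0-\mathbf{z}^*\|^2\le 2e^{-n\alpha\mu K}\|\mathbf{z}_0-\mathbf{z}^*\|^2+\frac{3l^2\sigma_*^2\alpha^3n^3K}{\mu}.$$ Moreover, if $\|\nu(\mathbf{z}_0)\|K/\mu>1$ and $\alpha=\min\{\mu/(5nl^2),\,2\log(\|\nu(\mathbf{z}_0)\|K/\mu)/(\mu nK)\}$, then $$\max_{\tau_1,\dots,\tau_K\in\mathbb{S}_n}\|\mathbf{z}^{K+1}_0-\mathbf{z}^*\|^2\le 2e^{-K/(5\kappa^2)}\|\mathbf{z}_0-\mathbf{z}^*\|^2+\frac{2\mu^2+24\kappa^2\sigma_*^2\log^3(\|\nu(\mathbf{z}_0)\|K/\mu)}{\mu^2K^2}.$$ In particular this applies to the incremental gradient method ($\tau_k=\mathrm{id}$ for all $k$).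
   Context: Setting: $n\ge1$; $\omega_1,\dots,\omega_n:\mathbb{R}^d\to\mathbb{R}^d$ are each $l$-Lipschitz (not necessarily monotone), and $\nu=\frac1n\sum_{i=1}^n\omega_i$ is $\mu$-strongly monotone ($\langle\nu(\mathbf{z}_1)-\nu(\mathbf{z}_2),\mathbf{z}_1-\mathbf{z}_2\rangle\ge\mu\|\mathbf{z}_1-\mathbf{z}_2\|^2$), with unique root $\mathbf{z}^*$. $\kappa=l/\mu$ and $\sigma_*^2=\frac1n\sum_{i=1}^n\|\omega_i(\mathbf{z}^* )\|^2$. $\mathbb{S}_n$ is the set of permutations of $[n]$. GDA with permutations $\tau_1,\dots,\tau_K$: $\mathbf{z}^1_0=\mathbf{z}_0$; in epoch $k$, $\mathbf{z}^k_i=\mathbf{z}^k_{i-1}-\alpha\,\omega_{\tau_k(i)}(\mathbf{z}^k_{i-1})$ for $i=1,\dots,n$, and $\mathbf{z}^{k+1}_0=\mathbf{z}^k_n$. The maximum is over all sequences of permutations (adversarial shuffling). *)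

theory Defs
  imports "HOL-Analysis.Analysis" "HOL-Combinatorics.Permutations"
begin

fun gda_epoch :: "real \<Rightarrow> (nat \<Rightarrow> 'a::real_normed_vector \<Rightarrow> 'a) \<Rightarrow> (nat \<Rightarrow> nat) \<Rightarrow> 'a \<Rightarrow> nat \<Rightarrow> 'a" where
  "gda_epoch a w perm z 0 = z"
| "gda_epoch a w perm z (Suc i) =
     (let y = gda_epoch a w perm z i in y - a *\<^sub>R w (perm (Suc i)) y)"

text \<open>gda_run a w n tau z0 K = z^{K+1}_0, after epochs 1..K using permutations tau 1, ..., tau K.\<close>
fun gda_run :: "real \<Rightarrow> (nat \<Rightarrow> 'a::real_normed_vector \<Rightarrow> 'a) \<Rightarrow> nat \<Rightarrow> (nat \<Rightarrow> nat \<Rightarrow> nat) \<Rightarrow> 'a \<Rightarrow> nat \<Rightarrow> 'a" where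
  "gda_run a w n tau z0 0 = z0"
| "gda_run a w n tau z0 (Suc k) = gda_epoch a w (tau (Suc k)) (gda_run a w n tau z0 k) n"

definition mean_op :: "(nat \<Rightarrow> 'a::real_normed_vector \<Rightarrow> 'a) \<Rightarrow> nat \<Rightarrow> 'a \<Rightarrow> 'a" where
  "mean_op w n z = (1 / real n) *\<^sub>R (\<Sum>i=1..n. w i z)"

definition strongly_monotone :: "real \<Rightarrow> ('a::real_inner \<Rightarrow> 'a) \<Rightarrow> bool" where
  "strongly_monotone mu f \<longleftrightarrow> (\<forall>z1 z2. inner (f z1 - f z2) (z1 - z2) \<ge> mu * (norm (z1 - z2))^2)"

end

theory Submission
  imports Defs
begin


lemma epoch_sum:
  "gda_epoch a w p z i = z - a *\<^sub>R (\<Sum>j<i. w (p (Suc j)) (gda_epoch a w p z j))"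
  by (induction i) (simp_all add: Let_def algebra_simps scaleR_add_right)

lemma sum_perm_shift:
  assumes "p permutes {1..n}"
  shows "(\<Sum>j<n. f (p (Suc j))) = (\<Sum>i=1..n. (f i :: 'b::comm_monoid_add))"
proof -
  have "(\<Sum>j<n. f (p (Suc j))) = (\<Sum>i=1..n. f (p i))"
    by (induction n) auto
  also have "\<dots> = (\<Sum>i=1..n. f i)"
    using sum.permute[OF assms, of f] by simp
  finally show ?thesis .
qed

lemma mean_lip:
  fixes w :: "nat \<Rightarrow> 'a::real_normed_vector \<Rightarrow> 'a"
  assumes n: "n \<ge> 1" and lip: "\<And>i. i \<in> {1..n} \<Longrightarrow> l-lipschitz_on UNIV (w i)"
  shows "norm (mean_op w n x - mean_op w n y) \<le> l * norm (x - y)"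
proof -
  have "mean_op w n x - mean_op w n y = (1 / real n) *\<^sub>R (\<Sum>i=1..n. w i x - w i y)"
    by (simp add: mean_op_def sum_subtractf scaleR_diff_right)
  hence "norm (mean_op w n x - mean_op w n y) = (1 / real n) * norm (\<Sum>i=1..n. w i x - w i y)"
    by simp
  also have "\<dots> \<le> (1 / real n) * (\<Sum>i=1..n. norm (w i x - w i y))"
    by (intro mult_left_mono norm_sum) auto
  also have "\<dots> \<le> (1 / real n) * (\<Sum>i=1..n. l * norm (x - y))"
  proof (intro mult_left_mono sum_mono)
    fix i assume "i \<in> {1..n}"
    from lipschitz_onD[OF lip[OF this]] show "norm (w i x - w i y) \<le> l * norm (x - y)"
      by (simp add: dist_norm)
  qed auto
  also have "\<dots> = l * norm (x - y)" using n by simp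
  finally show ?thesis .
qed

lemma mu_le_l:
  fixes w :: "nat \<Rightarrow> 'a::euclidean_space \<Rightarrow> 'a"
  assumes n: "n \<ge> 1" and lip: "\<And>i. i \<in> {1..n} \<Longrightarrow> l-lipschitz_on UNIV (w i)"
    and smon: "strongly_monotone mu (mean_op w n)"
  shows "mu \<le> l"
proof -
  obtain b :: 'a where b: "b \<in> Basis" using nonempty_Basis by blast
  hence b0: "norm b > 0" using nonzero_Basis by auto
  let ?v = "mean_op w n b - mean_op w n 0"
  have "mu * (norm b)^2 \<le> inner ?v b" using smon unfolding strongly_monotone_def
    by (metis diff_zero)
  also have "\<dots> \<le> norm ?v * norm b" by (rule norm_cauchy_schwarz)
  also have "\<dots> \<le> l * norm b * norm b"
    using mean_lip[OF n lip, where x=b and y=0] b0 by (intro mult_right_mono) auto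
  finally have "mu * norm b * norm b \<le> l * norm b * norm b" by (simp add: power2_eq_square mult.assoc)
  thus ?thesis using b0 by simp
qed

lemma norm_sq_expand:
  fixes u v :: "'a::real_inner"
  shows "(norm (u - c *\<^sub>R v))^2 = (norm u)^2 - 2 * c * inner v u + c^2 * (norm v)^2"
proof -
  have "(norm (u - c *\<^sub>R v))^2 = inner (u - c *\<^sub>R v) (u - c *\<^sub>R v)" by (rule power2_norm_eq_inner)
  also have "\<dots> = inner u u - 2 * c * inner v u + c^2 * inner v v"
    by (simp add: inner_diff_left inner_diff_right inner_commute algebra_simps power2_eq_square)
  finally show ?thesis by (simp add: power2_norm_eq_inner)
qed



lemma scalar_step:
  fixes a N l mu r r' y U T S2 :: real
  assumes a: "a > 0" and N: "N \<ge> 1" and mu: "mu > 0" and ml: "mu \<le> l"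
    and step: "a * N * l^2 \<le> mu / 5"
    and r: "r \<ge> 0" and y: "y \<ge> 0" and U: "U \<ge> 0" and T: "T \<ge> 0" and S2: "S2 \<ge> 0"
    and r'0: "r' \<ge> 0"
    and h_r': "r' \<le> y + a * l * U"
    and h_y: "y^2 \<le> (1 - 2 * (a * N * mu) + a^2 * N^2 * l^2) * r^2"
    and h_U: "(1 - a * l * N) * U \<le> a * T + a * l * r * N^2 / 2"
    and h_T: "T^2 \<le> N^3 * S2 / 2"
  shows "r'^2 \<le> (1 - N * a * mu) * r^2 + 3 * l^2 * (S2 / N) * a^3 * N^3 / mu"
proof -
  define b where "b = a * N * mu"
  have l: "l > 0" using mu ml by linarith
  have b0: "b > 0" unfolding b_def using a N mu by simp
  have h1: "a^2 * N^2 * l^2 \<le> b / 5"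
  proof -
    have "(a * N) * (a * N * l^2) \<le> (a * N) * (mu / 5)"
      using step a N by (intro mult_left_mono) auto
    thus ?thesis unfolding b_def by (simp add: power2_eq_square algebra_simps)
  qed
  have h2: "b \<le> 1/5"
  proof -
    have "a * N * mu * l \<le> a * N * l * l" using ml a N l by (intro mult_left_mono mult_right_mono) auto
    also have "\<dots> = a * N * l^2" by (simp add: power2_eq_square)
    also have "\<dots> \<le> l / 5" using step ml by linarith
    finally have "b * l \<le> (1/5) * l" unfolding b_def by simp
    thus ?thesis using l by simp
  qed
  have h3: "a * l * N \<le> 1/5"
  proof -
    have "(a * l * N) * l = a * N * l^2" by (simp add: power2_eq_square)
    also have "\<dots> \<le> (1/5) * l" using step ml by linarith
    finally show ?thesis using l by (simp add: mult.commute mult.left_commute)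
  qed
  have h4: "y \<le> (1 - 9/10 * b) * r"
  proof (rule power2_le_imp_le)
    have "y^2 \<le> (1 - 2 * b + b / 5) * r^2"
      using h1 r by (intro order.trans[OF h_y] mult_right_mono) (use h1 in \<open>auto simp: b_def mult.commute mult.left_commute\<close>)
    also have "\<dots> \<le> ((1 - 9/10 * b) * r)^2"
      using b0 r by (simp add: power_mult_distrib) (intro mult_right_mono, auto simp: power2_eq_square algebra_simps)
    finally show "y^2 \<le> ((1 - 9/10 * b) * r)^2" .
    show "0 \<le> (1 - 9/10 * b) * r" using h2 r by simp
  qed
  have h5: "U \<le> 5/4 * (a * T + a * l * r * N^2 / 2)"
  proof -
    have "4/5 * U \<le> (1 - a * l * N) * U" using h3 U by (intro mult_right_mono) auto
    with h_U have "4/5 * U \<le> a * T + a * l * r * N^2 / 2" by linarith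
    moreover have "\<And>X::real. 4/5 * U \<le> X \<Longrightarrow> U \<le> 5/4 * X" by linarith
    ultimately show ?thesis by blast
  qed
  define P where "P = 5/4 * a^2 * l * T"
  have h6: "a * l * U \<le> P + b / 8 * r"
  proof -
    have "a * l * U \<le> a * l * (5/4 * (a * T + a * l * r * N^2 / 2))"
      using h5 a l by (intro mult_left_mono) auto
    also have "\<dots> = P + 5/8 * (a^2 * N^2 * l^2) * r" unfolding P_def by (simp add: power2_eq_square algebra_simps)
    also have "\<dots> \<le> P + 5/8 * (b/5) * r" using h1 r by (intro add_left_mono mult_right_mono) (auto simp: mult.commute mult.left_commute)
    finally show ?thesis by simp
  qed
  define R where "R = (1 - 31/40 * b) * r"
  have R0: "R \<ge> 0" unfolding R_def using h2 r by simp
  have P0: "P \<ge> 0" unfolding P_def using a l T by simp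
  have hr'': "r' \<le> R + P" using h_r' h4 h6 unfolding R_def by (simp add: algebra_simps)
  have sq: "r'^2 \<le> (R + P)^2" using hr'' r'0 by (intro power_mono) auto
  have young: "2 * R * P \<le> 2/5 * b * R^2 + 5/2 / b * P^2"
  proof -
    have "0 \<le> 2/5 * (b * R - 5/2 * P)^2" by simp
    hence "b * (2 * R * P) \<le> b * (2/5 * b * R^2 + 5/2 / b * P^2)"
      using b0 by (simp add: power2_eq_square algebra_simps)
    thus ?thesis using b0 by simp
  qed
  have poly: "(1 + 2/5 * b) * (1 - 31/40 * b)^2 \<le> 1 - b"
  proof -
    have bb: "b * b \<le> 1/25" using mult_mono[OF h2 h2] b0 by simp
    have b3: "b * b * b \<le> b / 25" using mult_right_mono[OF bb, of b] b0 by simp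
    have bb0: "b * b \<ge> 0" by simp
    have "(1 + 2/5*b)*(1 - 31/40*b)^2 = 1 - 23/20*b - 31/1600 * (b*b) + 961/4000*(b*b*b)"
      by (simp add: power2_eq_square field_simps)
    thus ?thesis using b3 bb0 b0 by linarith
  qed
  have hRR: "(1 + 2/5 * b) * R^2 \<le> (1 - b) * r^2"
    unfolding R_def using mult_right_mono[OF poly, of "r^2"] by (simp add: power_mult_distrib mult.assoc)
  have hP2: "P^2 \<le> 25/32 * a^4 * l^2 * N^3 * S2"
  proof -
    have "P^2 = 25/16 * a^4 * l^2 * T^2" unfolding P_def by (simp add: power2_eq_square power4_eq_xxxx algebra_simps)
    also have "\<dots> \<le> 25/16 * a^4 * l^2 * (N^3 * S2 / 2)" using h_T by (intro mult_left_mono) auto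
    finally show ?thesis by simp
  qed
  have hPP: "(1 + 5/2 / b) * P^2 \<le> 3 * l^2 * (S2 / N) * a^3 * N^3 / mu"
  proof -
    have "(1 + 5/2 / b) * P^2 \<le> (1 + 5/2 / b) * (25/32 * a^4 * l^2 * N^3 * S2)"
      using hP2 b0 by (intro mult_left_mono) auto
    also have "\<dots> = (b + 5/2) * (25/32) * (a^3 * l^2 * N^2 * S2 / mu)"
      using b0 a N mu unfolding b_def by (simp add: field_simps power2_eq_square power3_eq_cube power4_eq_xxxx)
    also have "\<dots> \<le> 3 * (a^3 * l^2 * N^2 * S2 / mu)"
      using h2 a mu S2 by (intro mult_right_mono) auto
    also have "\<dots> = 3 * l^2 * (S2 / N) * a^3 * N^3 / mu"
      using N by (simp add: field_simps power2_eq_square power3_eq_cube)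
    finally show ?thesis .
  qed
  have "(R + P)^2 = R^2 + 2 * R * P + P^2" by (simp add: power2_eq_square algebra_simps)
  also have "\<dots> \<le> (1 + 2/5 * b) * R^2 + (1 + 5/2 / b) * P^2" using young by (simp add: algebra_simps)
  also have "\<dots> \<le> (1 - b) * r^2 + 3 * l^2 * (S2 / N) * a^3 * N^3 / mu" using hRR hPP by linarith
  finally show ?thesis using sq unfolding b_def by (simp add: mult.commute mult.left_commute)
qed

lemma one_epoch:
  fixes w :: "nat \<Rightarrow> 'a::euclidean_space \<Rightarrow> 'a"
  assumes n_pos: "n \<ge> 1"
    and lip: "\<And>i. i \<in> {1..n} \<Longrightarrow> l-lipschitz_on UNIV (w i)"
    and mu_pos: "mu > 0"
    and smon: "strongly_monotone mu (mean_op w n)"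
    and root: "mean_op w n zs = 0"
    and p: "p permutes {1..n}" and a: "a > 0" and a_le: "a \<le> mu / (5 * real n * l^2)"
  shows "(norm (gda_epoch a w p z n - zs))^2 \<le> (1 - real n * a * mu) * (norm (z - zs))^2
     + 3 * l^2 * ((1 / real n) * (\<Sum>i=1..n. (norm (w i zs))^2)) * a^3 * real n^3 / mu"
proof -
  have ml: "mu \<le> l" by (rule mu_le_l[OF n_pos lip smon])
  have l: "l > 0" using ml mu_pos by linarith
  have N: "real n \<ge> 1" using n_pos by simp
  have step: "a * real n * l^2 \<le> mu / 5"
  proof -
    have "a * (5 * real n * l^2) \<le> mu" using a_le l N by (simp add: field_simps)
    thus ?thesis by simp
  qed
  define zi where "zi j = gda_epoch a w p z j" for j
  define D where "D j = norm (zi j - z)" for j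
  define r where "r = norm (z - zs)"
  define U where "U = (\<Sum>j<n. D j)"
  define A where "A j = norm (w (p (Suc j)) zs)" for j
  define T where "T = (\<Sum>i<n. \<Sum>j<i. A j)"
  define S2 where "S2 = (\<Sum>j<n. (A j)^2)"
  define nu where "nu = mean_op w n"
  have S2_eq: "S2 = (\<Sum>i=1..n. (norm (w i zs))^2)"
    unfolding S2_def A_def using sum_perm_shift[OF p, of "\<lambda>i. (norm (w i zs))^2"] by simp
  have pj: "p (Suc j) \<in> {1..n}" if "j < n" for j
    using permutes_in_image[OF p, of "Suc j"] that by simp
  have lipw: "norm (w (p (Suc j)) x - w (p (Suc j)) y) \<le> l * norm (x - y)" if "j < n" for j x y
    using lipschitz_onD[OF lip[OF pj[OF that]], of x y] by (simp add: dist_norm)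
  have D0: "D j \<ge> 0" for j unfolding D_def by simp
  have r0: "r \<ge> 0" unfolding r_def by simp
  have A0: "A j \<ge> 0" for j unfolding A_def by simp
  have F3: "norm (w (p (Suc j)) (zi j)) \<le> A j + l * r + l * D j" if "j < n" for j
  proof -
    have "norm (w (p (Suc j)) (zi j)) \<le> norm (w (p (Suc j)) zs) + norm (w (p (Suc j)) (zi j) - w (p (Suc j)) zs)"
      by (rule norm_triangle_sub)
    also have "\<dots> \<le> A j + l * norm (zi j - zs)" using lipw[OF that] unfolding A_def by simp
    also have "norm (zi j - zs) \<le> D j + r" unfolding D_def r_def
      using norm_triangle_ineq[of "zi j - z" "z - zs"] by simp
    hence "A j + l * norm (zi j - zs) \<le> A j + l * (D j + r)" using l by (intro add_left_mono mult_left_mono) auto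
    finally show ?thesis by (simp add: algebra_simps)
  qed
  have zi_eq: "zi i - z = - (a *\<^sub>R (\<Sum>j<i. w (p (Suc j)) (zi j)))" for i
    unfolding zi_def using epoch_sum[of a w p z i] by simp
  have F4: "D i \<le> a * (\<Sum>j<i. A j) + a * real i * l * r + a * l * U" if "i \<le> n" for i
  proof -
    have "D i = a * norm (\<Sum>j<i. w (p (Suc j)) (zi j))" unfolding D_def zi_eq using a by simp
    also have "\<dots> \<le> a * (\<Sum>j<i. norm (w (p (Suc j)) (zi j)))" using a by (intro mult_left_mono norm_sum) auto
    also have "\<dots> \<le> a * (\<Sum>j<i. A j + l * r + l * D j)" using a that F3 by (intro mult_left_mono sum_mono) auto
    also have "\<dots> = a * (\<Sum>j<i. A j) + a * real i * l * r + a * l * (\<Sum>j<i. D j)"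
      by (simp add: sum.distrib sum_distrib_left algebra_simps)
    also have "(\<Sum>j<i. D j) \<le> U" unfolding U_def using that D0 by (intro sum_mono2) auto
    hence "a * (\<Sum>j<i. A j) + a * real i * l * r + a * l * (\<Sum>j<i. D j) \<le> a * (\<Sum>j<i. A j) + a * real i * l * r + a * l * U"
      using a l by (intro add_left_mono mult_left_mono) auto
    finally show ?thesis .
  qed
  have gauss: "(\<Sum>i<n. real i) \<le> real n ^ 2 / 2"
  proof -
    have "2 * (\<Sum>i<m. real i) = real m * (real m - 1)" for m
      by (induction m) (auto simp: algebra_simps)
    from this[of n] show ?thesis by (simp add: power2_eq_square algebra_simps)
  qed
  have hU: "(1 - a * l * real n) * U \<le> a * T + a * l * r * real n ^ 2 / 2"
  proof -
    have "(\<Sum>i<n. D i) \<le> (\<Sum>i<n. a * (\<Sum>j<i. A j) + a * real i * l * r + a * l * U)"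
      by (intro sum_mono F4) auto
    hence "U \<le> (\<Sum>i<n. a * (\<Sum>j<i. A j) + a * real i * l * r + a * l * U)"
      by (simp only: U_def[symmetric])
    also have "\<dots> = a * T + a * l * r * (\<Sum>i<n. real i) + a * l * real n * U"
      unfolding T_def by (simp add: sum.distrib sum_distrib_left sum_distrib_right algebra_simps)
    also have "a * l * r * (\<Sum>i<n. real i) \<le> a * l * r * (real n ^ 2 / 2)"
      using gauss a l r0 by (intro mult_left_mono) auto
    finally show ?thesis by (simp add: algebra_simps)
  qed
  have hT: "T^2 \<le> real n ^ 3 * S2 / 2"
  proof -
    have "T^2 \<le> (\<Sum>i<n. (\<Sum>j<i. A j)^2) * real n"
      unfolding T_def using sum_squared_le_sum_of_squares[of "\<lambda>i. \<Sum>j<i. A j" "{..<n}"] by simp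
    also have "(\<Sum>i<n. (\<Sum>j<i. A j)^2) \<le> (\<Sum>i<n. S2 * real i)"
    proof (intro sum_mono)
      fix i assume i: "i \<in> {..<n}"
      have "(\<Sum>j<i. A j)^2 \<le> (\<Sum>j<i. (A j)^2) * real i"
        using sum_squared_le_sum_of_squares[of A "{..<i}"] by simp
      also have "(\<Sum>j<i. (A j)^2) \<le> S2" unfolding S2_def using i by (intro sum_mono2) auto
      finally show "(\<Sum>j<i. A j)^2 \<le> S2 * real i" by (simp add: mult_right_mono)
    qed
    hence "(\<Sum>i<n. (\<Sum>j<i. A j)^2) * real n \<le> (\<Sum>i<n. S2 * real i) * real n"
      by (intro mult_right_mono) auto
    also have "(\<Sum>i<n. S2 * real i) = S2 * (\<Sum>i<n. real i)" by (simp add: sum_distrib_left)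
    also have "S2 * (\<Sum>i<n. real i) * real n \<le> S2 * (real n ^ 2 / 2) * real n"
      unfolding S2_def using gauss by (intro mult_right_mono mult_left_mono sum_nonneg) auto
    finally show ?thesis by (simp add: power2_eq_square power3_eq_cube algebra_simps)
  qed
  define e where "e = (\<Sum>j<n. w (p (Suc j)) (zi j) - w (p (Suc j)) z)"
  have sumz: "(\<Sum>j<n. w (p (Suc j)) z) = real n *\<^sub>R nu z"
    using sum_perm_shift[OF p, of "\<lambda>i. w i z"] N unfolding nu_def mean_op_def by simp
  have zn: "zi n - zs = ((z - zs) - (a * real n) *\<^sub>R nu z) - a *\<^sub>R e"
  proof -
    have "(\<Sum>j<n. w (p (Suc j)) (zi j)) = e + real n *\<^sub>R nu z"
      unfolding e_def sum_subtractf sumz by simp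
    hence "zi n = z - a *\<^sub>R (e + real n *\<^sub>R nu z)" using zi_eq[of n] by (simp add: algebra_simps)
    thus ?thesis by (simp add: algebra_simps scaleR_add_right)
  qed
  have he: "norm e \<le> l * U"
  proof -
    have "norm e \<le> (\<Sum>j<n. norm (w (p (Suc j)) (zi j) - w (p (Suc j)) z))" unfolding e_def by (rule norm_sum)
    also have "\<dots> \<le> (\<Sum>j<n. l * D j)" unfolding D_def using lipw by (intro sum_mono) auto
    finally show ?thesis unfolding U_def by (simp add: sum_distrib_left)
  qed
  define y where "y = norm ((z - zs) - (a * real n) *\<^sub>R nu z)"
  have hr': "norm (zi n - zs) \<le> y + a * l * U"
  proof -
    have "norm (zi n - zs) \<le> y + norm (a *\<^sub>R e)" unfolding zn y_def by (rule norm_triangle_ineq4)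
    also have "norm (a *\<^sub>R e) \<le> a * (l * U)" using he a by (simp add: mult_left_mono)
    finally show ?thesis by simp
  qed
  have nuzs: "nu zs = 0" using root unfolding nu_def .
  have hmon: "inner (nu z) (z - zs) \<ge> mu * r^2"
    using smon nuzs unfolding strongly_monotone_def nu_def r_def by (metis diff_zero)
  have hlipnu: "norm (nu z) \<le> l * r"
    using mean_lip[where w=w and n=n and l=l and x=z and y=zs, OF n_pos lip] nuzs unfolding nu_def r_def by simp
  have hy: "y^2 \<le> (1 - 2 * (a * real n * mu) + a^2 * real n^2 * l^2) * r^2"
  proof -
    have "y^2 = r^2 - 2 * (a * real n) * inner (nu z) (z - zs) + (a * real n)^2 * (norm (nu z))^2"
      unfolding y_def r_def by (rule norm_sq_expand)
    also have "\<dots> \<le> r^2 - 2 * (a * real n) * (mu * r^2) + (a * real n)^2 * (l * r)^2"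
    proof -
      have "2 * (a * real n) * (mu * r^2) \<le> 2 * (a * real n) * inner (nu z) (z - zs)"
        using hmon a N by (intro mult_left_mono) auto
      moreover have "(a * real n)^2 * (norm (nu z))^2 \<le> (a * real n)^2 * (l * r)^2"
        using hlipnu by (intro mult_left_mono power_mono) auto
      ultimately show ?thesis by linarith
    qed
    also have "\<dots> = (1 - 2 * (a * real n * mu) + a^2 * real n^2 * l^2) * r^2"
      by (simp add: power2_eq_square algebra_simps)
    finally show ?thesis .
  qed
  have U0: "U \<ge> 0" unfolding U_def using D0 by (intro sum_nonneg) auto
  have T0: "T \<ge> 0" unfolding T_def using A0 by (intro sum_nonneg) auto
  have S20: "S2 \<ge> 0" unfolding S2_def by (intro sum_nonneg) auto
  have "(norm (zi n - zs))^2 \<le> (1 - real n * a * mu) * r^2 + 3 * l^2 * (S2 / real n) * a^3 * real n^3 / mu"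
    by (rule scalar_step[OF a N mu_pos ml step r0 _ U0 T0 S20 _ hr' hy hU hT]) (auto simp: y_def)
  thus ?thesis unfolding zi_def r_def S2_eq by simp
qed
lemma run_bound:
  fixes w :: "nat \<Rightarrow> 'a::euclidean_space \<Rightarrow> 'a"
  assumes n_pos: "n \<ge> 1"
    and lip: "\<And>i. i \<in> {1..n} \<Longrightarrow> l-lipschitz_on UNIV (w i)"
    and mu_pos: "mu > 0"
    and smon: "strongly_monotone mu (mean_op w n)"
    and root: "mean_op w n zs = 0"
    and a: "a > 0" and a_le: "a \<le> mu / (5 * real n * l^2)"
    and perms: "\<forall>k\<in>{1..K}. tau k permutes {1..n}"
  shows "k \<le> K \<Longrightarrow> (norm (gda_run a w n tau z0 k - zs))^2 \<le> (1 - real n * a * mu)^k * (norm (z0 - zs))^2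
     + real k * (3 * l^2 * ((1 / real n) * (\<Sum>i=1..n. (norm (w i zs))^2)) * a^3 * real n^3 / mu)"
proof (induction k)
  case 0
  then show ?case by simp
next
  case (Suc k)
  define C where "C = 3 * l^2 * ((1 / real n) * (\<Sum>i=1..n. (norm (w i zs))^2)) * a^3 * real n^3 / mu"
  have ml: "mu \<le> l" by (rule mu_le_l[OF n_pos lip smon])
  have l: "l > 0" using ml mu_pos by linarith
  have N: "real n \<ge> 1" using n_pos by simp
  have C0: "C \<ge> 0" unfolding C_def using a mu_pos n_pos by (intro divide_nonneg_pos mult_nonneg_nonneg sum_nonneg) auto
  have step: "a * real n * l^2 \<le> mu / 5"
  proof -
    have "a * (5 * real n * l^2) \<le> mu" using a_le l N by (simp add: field_simps)
    thus ?thesis by simp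
  qed
  have b1: "real n * a * mu \<le> 1"
  proof -
    have "real n * a * mu * l \<le> a * real n * l * l" using ml a N l by (simp add: mult_left_mono algebra_simps)
    also have "\<dots> = a * real n * l^2" by (simp add: power2_eq_square)
    also have "\<dots> \<le> l" using step ml mu_pos by linarith
    finally show ?thesis using l by simp
  qed
  have p: "tau (Suc k) permutes {1..n}" using perms Suc.prems by auto
  have "(norm (gda_run a w n tau z0 (Suc k) - zs))^2
      \<le> (1 - real n * a * mu) * (norm (gda_run a w n tau z0 k - zs))^2 + C"
    unfolding C_def by (simp only: gda_run.simps) (rule one_epoch[OF n_pos lip mu_pos smon root p a a_le])
  also have "\<dots> \<le> (1 - real n * a * mu) * ((1 - real n * a * mu)^k * (norm (z0 - zs))^2 + real k * C) + C"
    using Suc b1 unfolding C_def by (intro add_right_mono mult_left_mono) auto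
  also have "\<dots> \<le> (1 - real n * a * mu)^Suc k * (norm (z0 - zs))^2 + real (Suc k) * C"
  proof -
    have "(1 - real n * a * mu) * (real k * C) \<le> 1 * (real k * C)"
      using a N mu_pos C0 n_pos by (intro mult_right_mono) auto
    thus ?thesis by (simp add: algebra_simps)
  qed
  finally show ?case unfolding C_def .
qed

theorem theorem2:
  fixes w :: "nat \<Rightarrow> 'a::euclidean_space \<Rightarrow> 'a"
    and n :: nat and l mu :: real and z0 zs :: 'a
  assumes n_pos: "n \<ge> 1"
    and lip: "\<And>i. i \<in> {1..n} \<Longrightarrow> l-lipschitz_on UNIV (w i)"
    and mu_pos: "mu > 0"
    and smon: "strongly_monotone mu (mean_op w n)"
    and root: "mean_op w n zs = 0"
  shows
    "(\<forall>a K tau. 0 < a \<and> a \<le> mu / (5 * real n * l^2) \<and> K \<ge> 1 \<and>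
        (\<forall>k\<in>{1..K}. tau k permutes {1..n}) \<longrightarrow>
        (norm (gda_run a w n tau z0 K - zs))^2
          \<le> 2 * exp (- real n * a * mu * real K) * (norm (z0 - zs))^2
            + 3 * l^2 * ((1 / real n) * (\<Sum>i=1..n. (norm (w i zs))^2)) * a^3 * real n^3 * real K / mu)
     \<and>
     (\<forall>K tau. norm (mean_op w n z0) * real K / mu > 1 \<and> K \<ge> 1 \<and>
        (\<forall>k\<in>{1..K}. tau k permutes {1..n}) \<longrightarrow>
        (let a = min (mu / (5 * real n * l^2))
                     (2 * ln (norm (mean_op w n z0) * real K / mu) / (mu * real n * real K));
             kappa = l / mu;
             sigma2 = (1 / real n) * (\<Sum>i=1..n. (norm (w i zs))^2)
         in (norm (gda_run a w n tau z0 K - zs))^2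
          \<le> 2 * exp (- real K / (5 * kappa^2)) * (norm (z0 - zs))^2
            + (2 * mu^2 + 24 * kappa^2 * sigma2 * (ln (norm (mean_op w n z0) * real K / mu))^3)
              / (mu^2 * real K^2)))"
proof -
  have ml: "mu \<le> l" by (rule mu_le_l[OF n_pos lip smon])
  have l: "l > 0" using ml mu_pos by linarith
  have N: "real n \<ge> 1" using n_pos by simp
  define sigma2 where "sigma2 = (1 / real n) * (\<Sum>i=1..n. (norm (w i zs))^2)"
  have s0: "sigma2 \<ge> 0" unfolding sigma2_def by (intro mult_nonneg_nonneg sum_nonneg) auto
  have part1: "(norm (gda_run a w n tau z0 K - zs))^2
          \<le> 2 * exp (- real n * a * mu * real K) * (norm (z0 - zs))^2
            + 3 * l^2 * sigma2 * a^3 * real n^3 * real K / mu"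
    if a: "0 < a" and a_le: "a \<le> mu / (5 * real n * l^2)" and perms: "\<forall>k\<in>{1..K}. tau k permutes {1..n}"
    for a K tau
  proof -
    have step: "a * real n * l^2 \<le> mu / 5"
    proof -
      have "a * (5 * real n * l^2) \<le> mu" using a_le l N by (simp add: field_simps)
      thus ?thesis by simp
    qed
    have b1: "real n * a * mu \<le> 1"
    proof -
      have "real n * a * mu * l \<le> a * real n * l * l" using ml a N l by (simp add: mult_left_mono algebra_simps)
      also have "\<dots> = a * real n * l^2" by (simp add: power2_eq_square)
      also have "\<dots> \<le> l" using step ml mu_pos by linarith
      finally show ?thesis using l by simp
    qed
    have "(norm (gda_run a w n tau z0 K - zs))^2 \<le> (1 - real n * a * mu)^K * (norm (z0 - zs))^2
     + real K * (3 * l^2 * sigma2 * a^3 * real n^3 / mu)"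
      using run_bound[OF n_pos lip mu_pos smon root a a_le perms, of K z0] unfolding sigma2_def by simp
    also have "(1 - real n * a * mu)^K \<le> exp (- (real n * a * mu))^K"
      using b1 exp_ge_add_one_self[of "- (real n * a * mu)"] by (intro power_mono) auto
    also have "exp (- (real n * a * mu))^K = exp (- real n * a * mu * real K)"
      by (simp add: exp_of_nat2_mult[symmetric])
    finally have "(norm (gda_run a w n tau z0 K - zs))^2 \<le> exp (- real n * a * mu * real K) * (norm (z0 - zs))^2
     + real K * (3 * l^2 * sigma2 * a^3 * real n^3 / mu)" by (simp add: mult_right_mono)
    moreover have "exp (- real n * a * mu * real K) * (norm (z0 - zs))^2 \<le> 2 * exp (- real n * a * mu * real K) * (norm (z0 - zs))^2"
      by simp
    moreover have "real K * (3 * l^2 * sigma2 * a^3 * real n^3 / mu) = 3 * l^2 * sigma2 * a^3 * real n^3 * real K / mu"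
      by (simp add: algebra_simps)
    ultimately show ?thesis by linarith
  qed
  show ?thesis
  proof (intro conjI allI impI)
    fix a :: real and K :: nat and tau :: "nat \<Rightarrow> nat \<Rightarrow> nat"
    assume "0 < a \<and> a \<le> mu / (5 * real n * l^2) \<and> K \<ge> 1 \<and> (\<forall>k\<in>{1..K}. tau k permutes {1..n})"
    thus "(norm (gda_run a w n tau z0 K - zs))^2
          \<le> 2 * exp (- real n * a * mu * real K) * (norm (z0 - zs))^2
            + 3 * l^2 * ((1 / real n) * (\<Sum>i=1..n. (norm (w i zs))^2)) * a^3 * real n^3 * real K / mu"
      using part1 unfolding sigma2_def by blast
  next
    fix K :: nat and tau :: "nat \<Rightarrow> nat \<Rightarrow> nat"
    assume H: "norm (mean_op w n z0) * real K / mu > 1 \<and> K \<ge> 1 \<and> (\<forall>k\<in>{1..K}. tau k permutes {1..n})"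
    define X where "X = norm (mean_op w n z0) * real K / mu"
    define L where "L = ln X"
    define a1 where "a1 = mu / (5 * real n * l^2)"
    define a2 where "a2 = 2 * L / (mu * real n * real K)"
    define a where "a = min a1 a2"
    define r0 where "r0 = (norm (z0 - zs))^2"
    have X1: "X > 1" using H unfolding X_def by simp
    have K: "real K \<ge> 1" using H by simp
    have L0: "L > 0" unfolding L_def using X1 by simp
    have a1p: "a1 > 0" unfolding a1_def using mu_pos l N by simp
    have a2p: "a2 > 0" unfolding a2_def using L0 mu_pos N K by simp
    have ap: "a > 0" unfolding a_def using a1p a2p by simp
    have ale: "a \<le> mu / (5 * real n * l^2)" unfolding a_def a1_def by simp
    have r00: "r0 \<ge> 0" unfolding r0_def by simp
    have P1: "(norm (gda_run a w n tau z0 K - zs))^2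
          \<le> 2 * exp (- real n * a * mu * real K) * r0 + 3 * l^2 * sigma2 * a^3 * real n^3 * real K / mu"
      using part1[OF ap ale] H unfolding r0_def by blast
    have T2: "3 * l^2 * sigma2 * a^3 * real n^3 * real K / mu \<le> 24 * (l/mu)^2 * sigma2 * L^3 / (mu^2 * real K^2)"
    proof -
      have "a^3 \<le> a2^3" unfolding a_def using ap a1p a2p by (intro power_mono) auto
      hence "3 * l^2 * sigma2 * real n^3 * real K / mu * a^3 \<le> 3 * l^2 * sigma2 * real n^3 * real K / mu * a2^3"
        using s0 mu_pos by (intro mult_left_mono) auto
      also have "\<dots> = 24 * (l/mu)^2 * sigma2 * L^3 / (mu^2 * real K^2)"
        unfolding a2_def using mu_pos N K by (simp add: field_simps power2_eq_square power3_eq_cube)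
      finally show ?thesis by (simp add: algebra_simps)
    qed
    have T1: "2 * exp (- real n * a * mu * real K) * r0 \<le> 2 * exp (- real K / (5 * (l/mu)^2)) * r0 + 2 * mu^2 / (mu^2 * real K^2)"
    proof (cases "a1 \<le> a2")
      case True
      hence "a = a1" unfolding a_def by simp
      hence "- real n * a * mu * real K = - real K / (5 * (l/mu)^2)"
        unfolding a1_def using mu_pos l N by (simp add: field_simps power2_eq_square)
      thus ?thesis using mu_pos K by simp
    next
      case False
      hence "a = a2" unfolding a_def by simp
      hence "- real n * a * mu * real K = - 2 * L"
        unfolding a2_def using mu_pos N K by (simp add: field_simps)
      moreover have "exp (- 2 * L) = 1 / X^2"
      proof -
        have "exp (- 2 * L) = inverse (exp (2 * L))" by (simp add: exp_minus[symmetric])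
        also have "exp (2 * L) = (exp L)^2" by (rule exp_double)
        also have "exp L = X" unfolding L_def using X1 by simp
        finally show ?thesis by (simp add: divide_inverse)
      qed
      ultimately have "exp (- real n * a * mu * real K) = 1 / X^2" by simp
      hence e: "exp (- real n * a * mu * real K) = mu^2 / ((norm (mean_op w n z0))^2 * real K^2)"
        unfolding X_def by (simp add: power_divide power_mult_distrib)
      have nz: "norm (mean_op w n z0) > 0" using X1 mu_pos unfolding X_def
        by (metis divide_le_eq_1_pos less_trans zero_less_one mult_eq_0_iff norm_ge_zero order.not_eq_order_implies_strict not_less_iff_gr_or_eq divide_eq_0_iff)
      have mr: "mu * norm (z0 - zs) \<le> norm (mean_op w n z0)"
      proof (cases "norm (z0 - zs) = 0")
        case True thus ?thesis by simp
      next
        case False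
        have "mu * (norm (z0 - zs))^2 \<le> inner (mean_op w n z0 - mean_op w n zs) (z0 - zs)"
          using smon unfolding strongly_monotone_def by blast
        also have "\<dots> \<le> norm (mean_op w n z0) * norm (z0 - zs)" using root norm_cauchy_schwarz by simp
        finally have "(mu * norm (z0 - zs)) * norm (z0 - zs) \<le> norm (mean_op w n z0) * norm (z0 - zs)"
          by (simp add: power2_eq_square mult.assoc)
        thus ?thesis using False by simp
      qed
      have "mu^2 * r0 \<le> (norm (mean_op w n z0))^2" unfolding r0_def
        using power_mono[OF mr, of 2] mu_pos by (simp add: power_mult_distrib)
      hence "exp (- real n * a * mu * real K) * r0 \<le> 1 / real K^2"
        unfolding e using nz K by (simp add: field_simps)
      hence "2 * exp (- real n * a * mu * real K) * r0 \<le> 2 * mu^2 / (mu^2 * real K^2)"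
        using mu_pos by simp
      moreover have "0 \<le> 2 * exp (- real K / (5 * (l/mu)^2)) * r0" using r00 by simp
      ultimately show ?thesis by linarith
    qed
    have "(norm (gda_run a w n tau z0 K - zs))^2 \<le> 2 * exp (- real K / (5 * (l/mu)^2)) * r0
       + (2 * mu^2 + 24 * (l/mu)^2 * sigma2 * L^3) / (mu^2 * real K^2)"
      using P1 T1 T2 by (simp add: add_divide_distrib)
    thus "let a = min (mu / (5 * real n * l^2))
                     (2 * ln (norm (mean_op w n z0) * real K / mu) / (mu * real n * real K));
             kappa = l / mu;
             sigma2 = (1 / real n) * (\<Sum>i=1..n. (norm (w i zs))^2)
         in (norm (gda_run a w n tau z0 K - zs))^2
          \<le> 2 * exp (- real K / (5 * kappa^2)) * (norm (z0 - zs))^2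
            + (2 * mu^2 + 24 * kappa^2 * sigma2 * (ln (norm (mean_op w n z0) * real K / mu))^3)
              / (mu^2 * real K^2)"
      unfolding Let_def a_def a1_def a2_def L_def X_def r0_def sigma2_def by simp
  qed
qed

end
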